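(* In the bipartite case, a CPTP map $\mathcal M:\mathbf L(\mathcal H_X\otimes\mathcal H_Y)\to\mathbf L(\mathcal H_A\otimes\mathcal H_B)$ belongs to LOCQP if and only if it is a probabilistic mixture $\mathcal M=q\mathcal M_1+(1-q)\mathcal M_2$, $q\in[0,1]$, of a one-way LOCC map $\mathcal M_1$ from Alice to Bob and a one-way LOCC map $\mathcal M_2$ from Bob to Alice.
   Context: A quantum instrument with classical input $i$ is a family $\{\mathcal A_{o|i}\}_o$ of completely positive maps whose sum over $o$ is trace preserving. LOCQP is the set of maps $\sum_{i_A,i_B,o_A,o_B}p(i_A,i_B|o_A,o_B)\,\mathcal A_{o_A|i_A}\otimes\mathcal B_{o_B|i_B}$ with instruments $\{\mathcal A_{o_A|i_A}\}_{o_A}$ ($\mathbf L(\mathcal H_X)\to\mathbf L(\mathcal H_A)$), $\{\mathcal B_{o_B|i_B}\}_{o_B}$ ($\mathbf L(\mathcal H_Y)\to\mathbf L(\mathcal H_B)$), where $p$ is a conditional probability distribution over finite sets satisfying $\sum_{i_A,i_B,o_A,o_B}p(i_A,i_B|o_A,o_B)p_A(o_A|i_A)p_B(o_B|i_B)=1$ for all conditional probability distributions $p_A(o_A|i_A)$, $p_B(o_B|i_B)$ (equivalently, the displayed sum is CPTP for all choices of instruments). One-way LOCC from Alice to Bob is the set of maps $\sum_m\mathcal A_m\otimes\mathcal B_{|m}$ with $\{\mathcal A_m\}_m$ an instrument of Alice and each $\mathcal B_{|m}$ a CPTP map of Bob; symmetrically from Bob to Alice. *)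

theory Defs
  imports Complex_Main
begin

text \<open>Finite-dimensional Hilbert spaces are modelled as C^I for a finite index type I;
 operators on C^I are complex matrices indexed by I (functions I => I => complex).
 The composite system H_X (x) H_Y has index type 'x * 'y.\<close>

type_synonym 'i op = "'i \<Rightarrow> 'i \<Rightarrow> complex"
type_synonym ('i, 'j) qmap = "'i op \<Rightarrow> 'j op"

definition op_trace :: "('i::finite) op \<Rightarrow> complex" where
  "op_trace M = (\<Sum>i\<in>UNIV. M i i)"

definition unit_op :: "'i \<Rightarrow> 'i \<Rightarrow> 'i op" where
  "unit_op x x' = (\<lambda>i j. if i = x \<and> j = x' then 1 else 0)"

definition psd :: "('i::finite) op \<Rightarrow> bool" where
  "psd M \<longleftrightarrow> (\<forall>v :: 'i \<Rightarrow> complex.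
      Im (\<Sum>i\<in>UNIV. \<Sum>j\<in>UNIV. cnj (v i) * M i j * v j) = 0 \<and>
      Re (\<Sum>i\<in>UNIV. \<Sum>j\<in>UNIV. cnj (v i) * M i j * v j) \<ge> 0)"

definition lin_map :: "('i, 'j) qmap \<Rightarrow> bool" where
  "lin_map \<Phi> \<longleftrightarrow> (\<forall>(c::complex) M N.
      \<Phi> (\<lambda>i j. c * M i j + N i j) = (\<lambda>k l. c * \<Phi> M k l + \<Phi> N k l))"

definition choi :: "('x, 'a) qmap \<Rightarrow> ('x \<times> 'a) op" where
  "choi \<Phi> = (\<lambda>(x, a) (x', a'). \<Phi> (unit_op x x') a a')"

text \<open>Completely positive (Choi's criterion: the Choi matrix is PSD).\<close>
definition CP :: "('x::finite, 'a::finite) qmap \<Rightarrow> bool" where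
  "CP \<Phi> \<longleftrightarrow> lin_map \<Phi> \<and> psd (choi \<Phi>)"

definition TP :: "('x::finite, 'a::finite) qmap \<Rightarrow> bool" where
  "TP \<Phi> \<longleftrightarrow> (\<forall>M. op_trace (\<Phi> M) = op_trace M)"

definition CPTP :: "('x::finite, 'a::finite) qmap \<Rightarrow> bool" where
  "CPTP \<Phi> \<longleftrightarrow> CP \<Phi> \<and> TP \<Phi>"

definition sum_maps :: "'l set \<Rightarrow> ('l \<Rightarrow> ('i, 'j) qmap) \<Rightarrow> ('i, 'j) qmap" where
  "sum_maps L F = (\<lambda>M k l. \<Sum>m\<in>L. F m M k l)"

definition instrument :: "'l set \<Rightarrow> ('l \<Rightarrow> ('x::finite, 'a::finite) qmap) \<Rightarrow> bool" where
  "instrument Outs F \<longleftrightarrow> finite Outs \<and> (\<forall>m\<in>Outs. CP (F m)) \<and> TP (sum_maps Outs F)"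

text \<open>Tensor product of two linear maps, defined on the product basis of matrix units.\<close>
definition tensor_map :: "('x::finite, 'a) qmap \<Rightarrow> ('y::finite, 'b) qmap \<Rightarrow> ('x \<times> 'y, 'a \<times> 'b) qmap" where
  "tensor_map \<Phi> \<Psi> = (\<lambda>\<rho> (a, b) (a', b').
      \<Sum>x\<in>UNIV. \<Sum>x'\<in>UNIV. \<Sum>y\<in>UNIV. \<Sum>y'\<in>UNIV.
        \<rho> (x, y) (x', y') * \<Phi> (unit_op x x') a a' * \<Psi> (unit_op y y') b b')"

definition cond_prob :: "'i set \<Rightarrow> 'o set \<Rightarrow> ('o \<Rightarrow> 'i \<Rightarrow> real) \<Rightarrow> bool" where
  "cond_prob I Outs p \<longleftrightarrow> (\<forall>i\<in>I. (\<forall>r\<in>Outs. p r i \<ge> 0) \<and> (\<Sum>r\<in>Outs. p r i) = 1)"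

text \<open>A o i is the element of Alice's instrument with classical input i and outcome o;
  p iA iB oA oB stands for p(iA,iB|oA,oB).\<close>
definition LOCQP :: "('x::finite \<times> 'y::finite, 'a::finite \<times> 'b::finite) qmap set" where
  "LOCQP = {\<M>. \<exists>(IA::nat set) (IB::nat set) (OA::nat set) (OB::nat set)
       (p :: nat \<Rightarrow> nat \<Rightarrow> nat \<Rightarrow> nat \<Rightarrow> real)
       (A :: nat \<Rightarrow> nat \<Rightarrow> ('x, 'a) qmap) (B :: nat \<Rightarrow> nat \<Rightarrow> ('y, 'b) qmap).
     finite IA \<and> finite IB \<and> finite OA \<and> finite OB \<and>
     (\<forall>iA\<in>IA. instrument OA (\<lambda>oA. A oA iA)) \<and>
     (\<forall>iB\<in>IB. instrument OB (\<lambda>oB. B oB iB)) \<and>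
     cond_prob (OA \<times> OB) (IA \<times> IB) (\<lambda>(iA, iB) (oA, oB). p iA iB oA oB) \<and>
     (\<forall>pA pB. cond_prob IA OA pA \<longrightarrow> cond_prob IB OB pB \<longrightarrow>
        (\<Sum>iA\<in>IA. \<Sum>iB\<in>IB. \<Sum>oA\<in>OA. \<Sum>oB\<in>OB.
            p iA iB oA oB * pA oA iA * pB oB iB) = 1) \<and>
     \<M> = (\<lambda>\<rho> k l. \<Sum>iA\<in>IA. \<Sum>iB\<in>IB. \<Sum>oA\<in>OA. \<Sum>oB\<in>OB.
            complex_of_real (p iA iB oA oB) * tensor_map (A oA iA) (B oB iB) \<rho> k l)}"

definition LOCC_AB :: "('x::finite \<times> 'y::finite, 'a::finite \<times> 'b::finite) qmap set" where
  "LOCC_AB = {\<M>. \<exists>(L::nat set) (A :: nat \<Rightarrow> ('x, 'a) qmap) (B :: nat \<Rightarrow> ('y, 'b) qmap).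
     instrument L A \<and> (\<forall>m\<in>L. CPTP (B m)) \<and>
     \<M> = sum_maps L (\<lambda>m. tensor_map (A m) (B m))}"

definition LOCC_BA :: "('x::finite \<times> 'y::finite, 'a::finite \<times> 'b::finite) qmap set" where
  "LOCC_BA = {\<M>. \<exists>(L::nat set) (A :: nat \<Rightarrow> ('x, 'a) qmap) (B :: nat \<Rightarrow> ('y, 'b) qmap).
     instrument L B \<and> (\<forall>m\<in>L. CPTP (A m)) \<and>
     \<M> = sum_maps L (\<lambda>m. tensor_map (A m) (B m))}"

end

theory Submission
  imports Defs "HOL-Library.Nat_Bijection"
begin


definition scale_map :: "real \<Rightarrow> ('i, 'j) qmap \<Rightarrow> ('i, 'j) qmap" where
  "scale_map c \<Phi> = (\<lambda>\<rho> k l. complex_of_real c * \<Phi> \<rho> k l)"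

definition zero_map :: "('i, 'j) qmap" where
  "zero_map = (\<lambda>\<rho> k l. 0)"

definition qf :: "('i::finite) op \<Rightarrow> ('i \<Rightarrow> complex) \<Rightarrow> complex" where
  "qf C v = (\<Sum>i\<in>UNIV. \<Sum>j\<in>UNIV. cnj (v i) * C i j * v j)"

lemma psd_qf: "psd C \<longleftrightarrow> (\<forall>v. Im (qf C v) = 0 \<and> Re (qf C v) \<ge> 0)"
  by (simp add: psd_def qf_def)

lemma qf_scale: "qf (\<lambda>i j. complex_of_real c * C i j) v = complex_of_real c * qf C v"
  unfolding qf_def by (simp add: sum_distrib_left mult_ac)

lemma qf_sum: "qf (\<lambda>i j. \<Sum>s\<in>S. C s i j) v = (\<Sum>s\<in>S. qf (C s) v)"
  unfolding qf_def
  by (simp add: sum_distrib_left sum_distrib_right mult_ac sum.swap[of _ S] )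

lemma CP_scale:
  assumes "CP \<Phi>" "c \<ge> 0" shows "CP (scale_map c \<Phi>)"
proof -
  have lin: "lin_map \<Phi>" and ps: "psd (choi \<Phi>)" using assms by (auto simp: CP_def)
  have "lin_map (scale_map c \<Phi>)"
    using lin unfolding lin_map_def scale_map_def
    by (auto simp: algebra_simps fun_eq_iff)
  moreover have "choi (scale_map c \<Phi>) = (\<lambda>i j. complex_of_real c * choi \<Phi> i j)"
    by (auto simp: choi_def scale_map_def fun_eq_iff)
  moreover have "psd (\<lambda>i j. complex_of_real c * choi \<Phi> i j)"
    using ps assms(2) unfolding psd_qf qf_scale by simp
  ultimately show ?thesis by (simp add: CP_def)
qed

lemma CP_sum:
  fixes F :: "'l \<Rightarrow> ('x::finite,'y::finite) qmap"
  assumes "\<forall>s\<in>S. CP (F s)" shows "CP (sum_maps S F)"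
proof -
  have lin: "\<forall>s\<in>S. lin_map (F s)" and ps: "\<forall>s\<in>S. psd (choi (F s))" using assms by (auto simp: CP_def)
  have "lin_map (sum_maps S F)"
    unfolding lin_map_def sum_maps_def
  proof (intro allI)
    fix c :: complex and M N :: "'x op"
    show "(\<lambda>k l. \<Sum>m\<in>S. F m (\<lambda>i j. c * M i j + N i j) k l) =
          (\<lambda>k l. c * (\<Sum>m\<in>S. F m M k l) + (\<Sum>m\<in>S. F m N k l))"
    proof (intro ext)
      fix k l
      have "(\<Sum>m\<in>S. F m (\<lambda>i j. c * M i j + N i j) k l) = (\<Sum>m\<in>S. c * F m M k l + F m N k l)"
        using lin by (intro sum.cong) (auto simp: lin_map_def)
      then show "(\<Sum>m\<in>S. F m (\<lambda>i j. c * M i j + N i j) k l) = c * (\<Sum>m\<in>S. F m M k l) + (\<Sum>m\<in>S. F m N k l)"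
        by (simp add: sum.distrib sum_distrib_left)
    qed
  qed
  moreover have "choi (sum_maps S F) = (\<lambda>i j. \<Sum>s\<in>S. choi (F s) i j)"
    by (auto simp: choi_def sum_maps_def fun_eq_iff)
  moreover have "psd (\<lambda>i j. \<Sum>s\<in>S. choi (F s) i j)"
    using ps unfolding psd_qf qf_sum by (auto simp: Im_sum Re_sum intro: sum_nonneg)
  ultimately show ?thesis by (simp add: CP_def)
qed

lemma CP_zero: "CP (zero_map :: ('i::finite,'j::finite) qmap)"
proof -
  have e: "sum_maps ({}::nat set) (\<lambda>_. zero_map) = (zero_map :: ('i,'j) qmap)" by (simp add: sum_maps_def zero_map_def)
  have "CP (sum_maps ({}::nat set) (\<lambda>_. zero_map :: ('i,'j) qmap))" by (rule CP_sum) simp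
  then show ?thesis by (simp only: e)
qed

lemma trace_sum: "op_trace (\<lambda>k l. \<Sum>s\<in>S. F s k l) = (\<Sum>s\<in>S. op_trace (F s))"
  unfolding op_trace_def by (rule sum.swap)

lemma trace_scale: "op_trace (\<lambda>k l. c * F k l) = c * op_trace F"
  unfolding op_trace_def by (simp add: sum_distrib_left)

lemma not_TP_empty: "\<not> TP (sum_maps {} F :: ('i::finite,'j::finite) qmap)"
proof
  assume "TP (sum_maps {} F)"
  then have "op_trace (sum_maps {} F (unit_op x x)) = op_trace (unit_op x x)" for x :: 'i
    by (simp add: TP_def)
  moreover have "op_trace (unit_op (x::'i) x) = 1" for x
    by (simp add: op_trace_def unit_op_def)
  ultimately show False by (simp add: sum_maps_def op_trace_def)
qed

lemma tensor_apply: "tensor_map \<Phi> \<Psi> \<rho> (a,b) (a',b') =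
   (\<Sum>x\<in>UNIV. \<Sum>x'\<in>UNIV. \<Sum>y\<in>UNIV. \<Sum>y'\<in>UNIV.
        \<rho> (x, y) (x', y') * \<Phi> (unit_op x x') a a' * \<Psi> (unit_op y y') b b')"
  by (simp add: tensor_map_def)

lemma tensor_scale_left: "tensor_map (scale_map c \<Phi>) \<Psi> \<rho> k l = complex_of_real c * tensor_map \<Phi> \<Psi> \<rho> k l"
  by (cases k; cases l) (simp add: tensor_apply scale_map_def sum_distrib_left mult_ac)

lemma tensor_scale_right: "tensor_map \<Phi> (scale_map c \<Psi>) \<rho> k l = complex_of_real c * tensor_map \<Phi> \<Psi> \<rho> k l"
  by (cases k; cases l) (simp add: tensor_apply scale_map_def sum_distrib_left mult_ac)

lemma tensor_sum_left: "tensor_map (sum_maps S F) \<Psi> \<rho> k l = (\<Sum>s\<in>S. tensor_map (F s) \<Psi> \<rho> k l)"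
  by (cases k; cases l) (simp add: tensor_apply sum_maps_def sum_distrib_left sum_distrib_right sum.swap[of _ S])

lemma tensor_sum_right: "tensor_map \<Phi> (sum_maps S F) \<rho> k l = (\<Sum>s\<in>S. tensor_map \<Phi> (F s) \<rho> k l)"
  by (cases k; cases l) (simp add: tensor_apply sum_maps_def sum_distrib_left sum_distrib_right sum.swap[of _ S])

lemma tensor_zero_right: "tensor_map \<Phi> zero_map \<rho> k l = 0"
  by (cases k; cases l) (simp add: tensor_apply zero_map_def)

lemma tensor_zero_left: "tensor_map zero_map \<Psi> \<rho> k l = 0"
  by (cases k; cases l) (simp add: tensor_apply zero_map_def)




definition Norm where
 "Norm IA IB OA OB p \<longleftrightarrow> (\<forall>pA pB. cond_prob IA OA pA \<longrightarrow> cond_prob IB OB pB \<longrightarrow>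
        (\<Sum>iA\<in>IA. \<Sum>iB\<in>IB. \<Sum>oA\<in>OA. \<Sum>oB\<in>OB.
            (p iA iB oA oB::real) * pA oA iA * pB oB iB) = 1)"

lemma cond_prob_det: "finite OA \<Longrightarrow> f ` IA \<subseteq> OA \<Longrightarrow> cond_prob IA OA (\<lambda>u i. if u = f i then 1 else (0::real))"
  unfolding cond_prob_def by (auto simp: sum.delta)

lemma norm_det:
  assumes N: "Norm IA IB OA OB p" and fin: "finite OA" "finite OB"
    and f: "f ` IA \<subseteq> OA" and g: "g ` IB \<subseteq> OB"
  shows "(\<Sum>iA\<in>IA. \<Sum>iB\<in>IB. p iA iB (f iA) (g iB)) = 1"
proof -
  have "(\<Sum>iA\<in>IA. \<Sum>iB\<in>IB. \<Sum>oA\<in>OA. \<Sum>oB\<in>OB.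
            p iA iB oA oB * (if oA = f iA then 1 else 0) * (if oB = g iB then 1 else 0)) = 1"
    using N cond_prob_det[OF fin(1) f] cond_prob_det[OF fin(2) g] unfolding Norm_def by blast
  moreover have "(\<Sum>iA\<in>IA. \<Sum>iB\<in>IB. \<Sum>oA\<in>OA. \<Sum>oB\<in>OB.
            p iA iB oA oB * (if oA = f iA then 1 else 0) * (if oB = g iB then 1 else 0))
     = (\<Sum>iA\<in>IA. \<Sum>iB\<in>IB. p iA iB (f iA) (g iB))"
  proof (intro sum.cong refl)
    fix iA iB assume "iA \<in> IA" "iB \<in> IB"
    then have "f iA \<in> OA" "g iB \<in> OB" using f g by auto
    then show "(\<Sum>oA\<in>OA. \<Sum>oB\<in>OB. p iA iB oA oB * (if oA = f iA then 1 else 0) * (if oB = g iB then 1 else 0))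
       = p iA iB (f iA) (g iB)"
      using fin by (simp add: if_distrib[of "\<lambda>x. _ * x"] sum.delta' cong: if_cong)
  qed
  ultimately show ?thesis by simp
qed

lemma sum_split_at: "finite S \<Longrightarrow> x \<in> S \<Longrightarrow> sum h S = h x + sum h (S - {x})"
  by (simp add: sum.remove)

lemma marg_A:
  assumes N: "Norm IA IB OA OB p" and fin: "finite IA" "finite OA" "finite OB"
    and iA0: "iA0 \<in> IA" and o1: "o1 \<in> OA" and o2: "o2 \<in> OA" and g: "g ` IB \<subseteq> OB"
  shows "(\<Sum>iB\<in>IB. p iA0 iB o1 (g iB)) = (\<Sum>iB\<in>IB. p iA0 iB o2 (g iB))"
proof -
  define f1 where "f1 = (\<lambda>_. o2)(iA0 := o1)"
  define f2 where "f2 = (\<lambda>_. o2)(iA0 := o2)"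
  have a: "(\<Sum>iA\<in>IA. \<Sum>iB\<in>IB. p iA iB (f1 iA) (g iB)) = 1"
    by (rule norm_det[OF N fin(2,3) _ g]) (use o1 o2 in \<open>auto simp: f1_def\<close>)
  have b: "(\<Sum>iA\<in>IA. \<Sum>iB\<in>IB. p iA iB (f2 iA) (g iB)) = 1"
    by (rule norm_det[OF N fin(2,3) _ g]) (use o1 o2 in \<open>auto simp: f2_def\<close>)
  have r: "(\<Sum>iA\<in>IA-{iA0}. \<Sum>iB\<in>IB. p iA iB (f1 iA) (g iB)) = (\<Sum>iA\<in>IA-{iA0}. \<Sum>iB\<in>IB. p iA iB (f2 iA) (g iB))"
    by (intro sum.cong) (auto simp: f1_def f2_def)
  show ?thesis
    using a b r sum_split_at[OF fin(1) iA0, of "\<lambda>iA. \<Sum>iB\<in>IB. p iA iB (f1 iA) (g iB)"]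
      sum_split_at[OF fin(1) iA0, of "\<lambda>iA. \<Sum>iB\<in>IB. p iA iB (f2 iA) (g iB)"]
    by (simp add: f1_def f2_def)
qed

lemma sep:
  assumes N: "Norm IA IB OA OB p" and fin: "finite IA" "finite IB" "finite OA" "finite OB"
    and iA: "iA \<in> IA" and iB: "iB \<in> IB" and oA: "oA \<in> OA" and oA0: "oA0 \<in> OA"
    and oB: "oB \<in> OB" and oB0: "oB0 \<in> OB"
  shows "p iA iB oA oB = p iA iB oA oB0 + p iA iB oA0 oB - p iA iB oA0 oB0"
proof -
  define g1 where "g1 = (\<lambda>_. oB0)(iB := oB)"
  define g2 where "g2 = (\<lambda>_. oB0)(iB := oB0)"
  have g1: "g1 ` IB \<subseteq> OB" and g2: "g2 ` IB \<subseteq> OB" using oB oB0 by (auto simp: g1_def g2_def)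
  have a: "(\<Sum>iB\<in>IB. p iA iB oA (g1 iB)) = (\<Sum>iB\<in>IB. p iA iB oA0 (g1 iB))"
    by (rule marg_A[OF N fin(1,3,4) iA oA oA0 g1])
  have b: "(\<Sum>iB\<in>IB. p iA iB oA (g2 iB)) = (\<Sum>iB\<in>IB. p iA iB oA0 (g2 iB))"
    by (rule marg_A[OF N fin(1,3,4) iA oA oA0 g2])
  have r1: "(\<Sum>iB'\<in>IB-{iB}. p iA iB' oA (g1 iB')) = (\<Sum>iB'\<in>IB-{iB}. p iA iB' oA (g2 iB'))"
    by (intro sum.cong) (auto simp: g1_def g2_def)
  have r2: "(\<Sum>iB'\<in>IB-{iB}. p iA iB' oA0 (g1 iB')) = (\<Sum>iB'\<in>IB-{iB}. p iA iB' oA0 (g2 iB'))"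
    by (intro sum.cong) (auto simp: g1_def g2_def)
  show ?thesis
    using a b r1 r2 
      sum_split_at[OF fin(2) iB, of "\<lambda>iB. p iA iB oA (g1 iB)"]
      sum_split_at[OF fin(2) iB, of "\<lambda>iB. p iA iB oA0 (g1 iB)"]
      sum_split_at[OF fin(2) iB, of "\<lambda>iB. p iA iB oA (g2 iB)"]
      sum_split_at[OF fin(2) iB, of "\<lambda>iB. p iA iB oA0 (g2 iB)"]
    by (simp add: g1_def g2_def)
qed


lemma marg_B:
  assumes N: "Norm IA IB OA OB p" and fin: "finite IB" "finite OA" "finite OB"
    and iB0: "iB0 \<in> IB" and o1: "o1 \<in> OB" and o2: "o2 \<in> OB" and f: "f ` IA \<subseteq> OA"
  shows "(\<Sum>iA\<in>IA. p iA iB0 (f iA) o1) = (\<Sum>iA\<in>IA. p iA iB0 (f iA) o2)"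
proof -
  define g1 where "g1 = (\<lambda>_. o2)(iB0 := o1)"
  define g2 where "g2 = (\<lambda>_. o2)(iB0 := o2)"
  have a: "(\<Sum>iA\<in>IA. \<Sum>iB\<in>IB. p iA iB (f iA) (g1 iB)) = 1"
    by (rule norm_det[OF N fin(2,3) f]) (use o1 o2 in \<open>auto simp: g1_def\<close>)
  have b: "(\<Sum>iA\<in>IA. \<Sum>iB\<in>IB. p iA iB (f iA) (g2 iB)) = 1"
    by (rule norm_det[OF N fin(2,3) f]) (use o1 o2 in \<open>auto simp: g2_def\<close>)
  have a': "(\<Sum>iB\<in>IB. \<Sum>iA\<in>IA. p iA iB (f iA) (g1 iB)) = 1" using a by (simp add: sum.swap[of _ IA])
  have b': "(\<Sum>iB\<in>IB. \<Sum>iA\<in>IA. p iA iB (f iA) (g2 iB)) = 1" using b by (simp add: sum.swap[of _ IA])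
  have r: "(\<Sum>iB\<in>IB-{iB0}. \<Sum>iA\<in>IA. p iA iB (f iA) (g1 iB)) = (\<Sum>iB\<in>IB-{iB0}. \<Sum>iA\<in>IA. p iA iB (f iA) (g2 iB))"
    by (intro sum.cong) (auto simp: g1_def g2_def)
  show ?thesis
    using a' b' r sum_split_at[OF fin(1) iB0, of "\<lambda>iB. \<Sum>iA\<in>IA. p iA iB (f iA) (g1 iB)"]
      sum_split_at[OF fin(1) iB0, of "\<lambda>iB. \<Sum>iA\<in>IA. p iA iB (f iA) (g2 iB)"]
    by (simp add: g1_def g2_def)
qed

lemma decomp:
  fixes p :: "nat \<Rightarrow> nat \<Rightarrow> nat \<Rightarrow> nat \<Rightarrow> real"
  assumes N: "Norm IA IB OA OB p" and fin: "finite IA" "finite IB" "finite OA" "finite OB"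
    and oA0: "oA0 \<in> OA" and oB0: "oB0 \<in> OB"
    and nonneg: "\<And>iA iB oA oB. iA \<in> IA \<Longrightarrow> iB \<in> IB \<Longrightarrow> oA \<in> OA \<Longrightarrow> oB \<in> OB \<Longrightarrow> p iA iB oA oB \<ge> 0"
    and tot: "(\<Sum>iA\<in>IA. \<Sum>iB\<in>IB. p iA iB oA0 oB0) = 1"
  obtains R1 R2 r1 r2 q where
    "\<And>iA iB oA. iA \<in> IA \<Longrightarrow> iB \<in> IB \<Longrightarrow> oA \<in> OA \<Longrightarrow> R1 iA iB oA \<ge> 0"
    "\<And>iA iB oB. iA \<in> IA \<Longrightarrow> iB \<in> IB \<Longrightarrow> oB \<in> OB \<Longrightarrow> R2 iA iB oB \<ge> 0"
    "\<And>iA iB oA oB. iA \<in> IA \<Longrightarrow> iB \<in> IB \<Longrightarrow> oA \<in> OA \<Longrightarrow> oB \<in> OB \<Longrightarrow>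
        p iA iB oA oB = R1 iA iB oA + R2 iA iB oB"
    "\<And>iA oA. iA \<in> IA \<Longrightarrow> oA \<in> OA \<Longrightarrow> (\<Sum>iB\<in>IB. R1 iA iB oA) = r1 iA"
    "\<And>iB oB. iB \<in> IB \<Longrightarrow> oB \<in> OB \<Longrightarrow> (\<Sum>iA\<in>IA. R2 iA iB oB) = r2 iB"
    "(\<Sum>iA\<in>IA. r1 iA) = q" "(\<Sum>iB\<in>IB. r2 iB) = 1 - q"
proof -
  define mA where "mA iA iB = Min ((\<lambda>u. p iA iB u oB0) ` OA)" for iA iB
  define R1 where "R1 iA iB oA = p iA iB oA oB0 - mA iA iB" for iA iB oA
  define R2 where "R2 iA iB oB = p iA iB oA0 oB - p iA iB oA0 oB0 + mA iA iB" for iA iB oB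
  define r1 where "r1 iA = (\<Sum>iB\<in>IB. R1 iA iB oA0)" for iA
  define r2 where "r2 iB = (\<Sum>iA\<in>IA. R2 iA iB oB0)" for iB
  define q where "q = (\<Sum>iA\<in>IA. r1 iA)"
  have mle: "mA iA iB \<le> p iA iB u oB0" if "u \<in> OA" for iA iB u
    unfolding mA_def using fin(3) that by (intro Min_le) auto
  have min_in: "\<exists>u\<in>OA. mA iA iB = p iA iB u oB0" for iA iB
  proof -
    have "mA iA iB \<in> (\<lambda>u. p iA iB u oB0) ` OA" unfolding mA_def using fin(3) oA0 by (intro Min_in) auto
    then show ?thesis by auto
  qed
  show ?thesis
  proof
    show "R1 iA iB oA \<ge> 0" if "oA \<in> OA" for iA iB oA using mle[OF that] by (simp add: R1_def)
    show "R2 iA iB oB \<ge> 0" if "iA \<in> IA" "iB \<in> IB" "oB \<in> OB" for iA iB oB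
    proof -
      obtain u where u: "u \<in> OA" "mA iA iB = p iA iB u oB0" using min_in by blast
      have "p iA iB u oB = p iA iB u oB0 + p iA iB oA0 oB - p iA iB oA0 oB0"
        by (rule sep[OF N fin that(1,2) u(1) oA0 that(3) oB0])
      moreover have "p iA iB u oB \<ge> 0" using nonneg that u by auto
      ultimately show ?thesis using u by (simp add: R2_def)
    qed
    show "p iA iB oA oB = R1 iA iB oA + R2 iA iB oB" if "iA \<in> IA" "iB \<in> IB" "oA \<in> OA" "oB \<in> OB" for iA iB oA oB
      using sep[OF N fin that(1,2,3) oA0 that(4) oB0] by (simp add: R1_def R2_def)
    show "(\<Sum>iB\<in>IB. R1 iA iB oA) = r1 iA" if "iA \<in> IA" "oA \<in> OA" for iA oA
    proof -
      have "(\<Sum>iB\<in>IB. p iA iB oA ((\<lambda>_. oB0) iB)) = (\<Sum>iB\<in>IB. p iA iB oA0 ((\<lambda>_. oB0) iB))"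
        by (rule marg_A[OF N fin(1,3,4) that oA0]) (use oB0 in auto)
      then show ?thesis by (simp add: r1_def R1_def sum_subtractf)
    qed
    show "(\<Sum>iA\<in>IA. R2 iA iB oB) = r2 iB" if "iB \<in> IB" "oB \<in> OB" for iB oB
    proof -
      have "(\<Sum>iA\<in>IA. p iA iB ((\<lambda>_. oA0) iA) oB) = (\<Sum>iA\<in>IA. p iA iB ((\<lambda>_. oA0) iA) oB0)"
        by (rule marg_B[OF N fin(2,3,4) that oB0]) (use oA0 in auto)
      then show ?thesis by (simp add: r2_def R2_def sum_subtractf sum.distrib)
    qed
    show "(\<Sum>iA\<in>IA. r1 iA) = q" by (simp add: q_def)
    have "q + (\<Sum>iB\<in>IB. r2 iB) = (\<Sum>iA\<in>IA. \<Sum>iB\<in>IB. R1 iA iB oA0 + R2 iA iB oB0)"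
      by (simp add: q_def r1_def r2_def sum.distrib sum.swap[of _ IA])
    also have "\<dots> = (\<Sum>iA\<in>IA. \<Sum>iB\<in>IB. p iA iB oA0 oB0)"
      by (simp add: R1_def R2_def)
    finally show "(\<Sum>iB\<in>IB. r2 iB) = 1 - q" using tot by simp
  qed
qed



definition enc3 :: "nat \<times> nat \<times> nat \<Rightarrow> nat" where
  "enc3 t = (case t of (a,b,c) \<Rightarrow> prod_encode (a, prod_encode (b,c)))"
definition dec3 :: "nat \<Rightarrow> nat \<times> nat \<times> nat" where
  "dec3 m = (fst (prod_decode m), prod_decode (snd (prod_decode m)))"
lemma dec3_enc3[simp]: "dec3 (enc3 t) = t"
  by (cases t) (simp add: enc3_def dec3_def)
lemma inj_enc3: "inj enc3"
  by (metis dec3_enc3 injI)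
lemma sum_enc3: "(\<Sum>m\<in>enc3 ` S. h m) = (\<Sum>t\<in>S. h (enc3 t))"
  by (rule sum.reindex[unfolded comp_def]) (rule inj_on_subset[OF inj_enc3], simp)
lemma sum3: "(\<Sum>t\<in>X \<times> Y \<times> Z. h t) = (\<Sum>x\<in>X. \<Sum>y\<in>Y. \<Sum>z\<in>Z. h (x,y,z))"
  by (simp add: sum.cartesian_product)

lemma instr_CPTP: "instrument Os F \<Longrightarrow> CPTP (sum_maps Os F)"
  unfolding instrument_def CPTP_def by (auto intro: CP_sum)

lemma instr_trace: "instrument Os F \<Longrightarrow> (\<Sum>u\<in>Os. op_trace (F u \<rho>)) = op_trace \<rho>"
  unfolding instrument_def TP_def sum_maps_def trace_sum by simp

lemma trace_scale_map: "op_trace (scale_map c \<Phi> \<rho>) = complex_of_real c * op_trace (\<Phi> \<rho>)"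
  unfolding scale_map_def by (rule trace_scale)


lemma build_AB:
  fixes A :: "nat \<Rightarrow> nat \<Rightarrow> ('x::finite, 'a::finite) qmap" and B :: "nat \<Rightarrow> nat \<Rightarrow> ('y::finite, 'b::finite) qmap"
  assumes fin: "finite IA" "finite IB" "finite OA" "finite OB"
    and instA: "\<forall>iA\<in>IA. instrument OA (\<lambda>oA. A oA iA)"
    and instB: "\<forall>iB\<in>IB. instrument OB (\<lambda>oB. B oB iB)"
    and R1: "\<And>iA iB oA. iA \<in> IA \<Longrightarrow> iB \<in> IB \<Longrightarrow> oA \<in> OA \<Longrightarrow> R1 iA iB oA \<ge> 0"
    and r1: "\<And>iA oA. iA \<in> IA \<Longrightarrow> oA \<in> OA \<Longrightarrow> (\<Sum>iB\<in>IB. R1 iA iB oA) = r1 iA"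
    and q: "(\<Sum>iA\<in>IA. r1 iA) = q" "q > 0"
  shows "sum_maps (enc3 ` (IA \<times> OA \<times> IB))
           (\<lambda>m. tensor_map (case dec3 m of (iA,oA,iB) \<Rightarrow> scale_map (R1 iA iB oA / q) (A oA iA))
                            (case dec3 m of (iA,oA,iB) \<Rightarrow> sum_maps OB (\<lambda>oB. B oB iB))) \<in> LOCC_AB"
proof -
  let ?L = "enc3 ` (IA \<times> OA \<times> IB)"
  let ?A = "\<lambda>m. case dec3 m of (iA,oA,iB) \<Rightarrow> scale_map (R1 iA iB oA / q) (A oA iA)"
  let ?B = "\<lambda>m. case dec3 m of (iA,oA,iB) \<Rightarrow> sum_maps OB (\<lambda>oB. B oB iB)"
  have "instrument ?L ?A"
    unfolding instrument_def
  proof (intro conjI ballI)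
    show "finite ?L" using fin by simp
    fix m assume "m \<in> ?L"
    then obtain iA oA iB where t: "iA \<in> IA" "oA \<in> OA" "iB \<in> IB" "m = enc3 (iA,oA,iB)" by auto
    have "CP (A oA iA)" using instA t unfolding instrument_def by auto
    then show "CP (?A m)" using t R1[OF t(1,3,2)] q(2) by (auto intro!: CP_scale)
  next
    show "TP (sum_maps ?L ?A)"
      unfolding TP_def
    proof
      fix \<rho> :: "'x op"
      have "op_trace (sum_maps ?L ?A \<rho>) = (\<Sum>m\<in>?L. op_trace (?A m \<rho>))"
        unfolding sum_maps_def by (rule trace_sum)
      also have "\<dots> = (\<Sum>iA\<in>IA. \<Sum>oA\<in>OA. \<Sum>iB\<in>IB. complex_of_real (R1 iA iB oA / q) * op_trace (A oA iA \<rho>))"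
        by (simp only: sum_enc3 sum3 dec3_enc3 prod.case trace_scale_map)
      also have "\<dots> = (\<Sum>iA\<in>IA. \<Sum>oA\<in>OA. complex_of_real (r1 iA / q) * op_trace (A oA iA \<rho>))"
      proof (intro sum.cong refl)
        fix iA oA assume "iA \<in> IA" "oA \<in> OA"
        then show "(\<Sum>iB\<in>IB. complex_of_real (R1 iA iB oA / q) * op_trace (A oA iA \<rho>)) =
           complex_of_real (r1 iA / q) * op_trace (A oA iA \<rho>)"
        proof -
          have "complex_of_real (r1 iA / q) * op_trace (A oA iA \<rho>) = complex_of_real ((\<Sum>iB\<in>IB. R1 iA iB oA) / q) * op_trace (A oA iA \<rho>)"
            using r1 \<open>iA \<in> IA\<close> \<open>oA \<in> OA\<close> by simp
          also have "\<dots> = (\<Sum>iB\<in>IB. complex_of_real (R1 iA iB oA / q) * op_trace (A oA iA \<rho>))"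
            by (simp only: sum_divide_distrib of_real_sum sum_distrib_right)
          finally show ?thesis by simp
        qed
      qed
      also have "\<dots> = (\<Sum>iA\<in>IA. complex_of_real (r1 iA / q) * op_trace \<rho>)"
      proof (intro sum.cong refl)
        fix iA assume "iA \<in> IA"
        then show "(\<Sum>oA\<in>OA. complex_of_real (r1 iA / q) * op_trace (A oA iA \<rho>)) = complex_of_real (r1 iA / q) * op_trace \<rho>"
          using instA instr_trace \<open>iA \<in> IA\<close> unfolding sum_distrib_left[symmetric] by metis
      qed
      also have "\<dots> = complex_of_real (q / q) * op_trace \<rho>"
        unfolding q(1)[symmetric] sum_distrib_right[symmetric] sum_divide_distrib[symmetric] of_real_sum[symmetric] by (rule refl)
      finally show "op_trace (sum_maps ?L ?A \<rho>) = op_trace \<rho>" using q(2) by simp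
    qed
  qed
  moreover have "\<forall>m\<in>?L. CPTP (?B m)"
    using instB by (auto intro: instr_CPTP)
  ultimately show ?thesis unfolding LOCC_AB_def
    by (intro CollectI exI[of _ ?L] exI[of _ ?A] exI[of _ ?B] conjI) (auto simp: sum_maps_def)
qed

lemma build_BA:
  fixes A :: "nat \<Rightarrow> nat \<Rightarrow> ('x::finite, 'a::finite) qmap" and B :: "nat \<Rightarrow> nat \<Rightarrow> ('y::finite, 'b::finite) qmap"
  assumes fin: "finite IA" "finite IB" "finite OA" "finite OB"
    and instA: "\<forall>iA\<in>IA. instrument OA (\<lambda>oA. A oA iA)"
    and instB: "\<forall>iB\<in>IB. instrument OB (\<lambda>oB. B oB iB)"
    and R2: "\<And>iA iB oB. iA \<in> IA \<Longrightarrow> iB \<in> IB \<Longrightarrow> oB \<in> OB \<Longrightarrow> R2 iA iB oB \<ge> 0"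
    and r2: "\<And>iB oB. iB \<in> IB \<Longrightarrow> oB \<in> OB \<Longrightarrow> (\<Sum>iA\<in>IA. R2 iA iB oB) = r2 iB"
    and q: "(\<Sum>iB\<in>IB. r2 iB) = q" "q > 0"
  shows "sum_maps (enc3 ` (IB \<times> OB \<times> IA))
           (\<lambda>m. tensor_map (case dec3 m of (iB,oB,iA) \<Rightarrow> sum_maps OA (\<lambda>oA. A oA iA))
                            (case dec3 m of (iB,oB,iA) \<Rightarrow> scale_map (R2 iA iB oB / q) (B oB iB))) \<in> LOCC_BA"
proof -
  let ?L = "enc3 ` (IB \<times> OB \<times> IA)"
  let ?B = "\<lambda>m. case dec3 m of (iB,oB,iA) \<Rightarrow> scale_map (R2 iA iB oB / q) (B oB iB)"
  let ?A = "\<lambda>m. case dec3 m of (iB,oB,iA) \<Rightarrow> sum_maps OA (\<lambda>oA. A oA iA)"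
  have "instrument ?L ?B"
    unfolding instrument_def
  proof (intro conjI ballI)
    show "finite ?L" using fin by simp
    fix m assume "m \<in> ?L"
    then obtain iA oB iB where t: "iB \<in> IB" "oB \<in> OB" "iA \<in> IA" "m = enc3 (iB,oB,iA)" by auto
    have "CP (B oB iB)" using instB t unfolding instrument_def by auto
    then show "CP (?B m)" using t R2[OF t(3,1,2)] q(2) by (auto intro!: CP_scale)
  next
    show "TP (sum_maps ?L ?B)"
      unfolding TP_def
    proof
      fix \<rho> :: "'y op"
      have "op_trace (sum_maps ?L ?B \<rho>) = (\<Sum>m\<in>?L. op_trace (?B m \<rho>))"
        unfolding sum_maps_def by (rule trace_sum)
      also have "\<dots> = (\<Sum>iB\<in>IB. \<Sum>oB\<in>OB. \<Sum>iA\<in>IA. complex_of_real (R2 iA iB oB / q) * op_trace (B oB iB \<rho>))"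
        by (simp only: sum_enc3 sum3 dec3_enc3 prod.case trace_scale_map)
      also have "\<dots> = (\<Sum>iB\<in>IB. \<Sum>oB\<in>OB. complex_of_real (r2 iB / q) * op_trace (B oB iB \<rho>))"
      proof (intro sum.cong refl)
        fix iB oB assume "iB \<in> IB" "oB \<in> OB"
        then show "(\<Sum>iA\<in>IA. complex_of_real (R2 iA iB oB / q) * op_trace (B oB iB \<rho>)) =
           complex_of_real (r2 iB / q) * op_trace (B oB iB \<rho>)"
        proof -
          have "complex_of_real (r2 iB / q) * op_trace (B oB iB \<rho>) = complex_of_real ((\<Sum>iA\<in>IA. R2 iA iB oB) / q) * op_trace (B oB iB \<rho>)"
            using r2 \<open>iB \<in> IB\<close> \<open>oB \<in> OB\<close> by simp
          also have "\<dots> = (\<Sum>iA\<in>IA. complex_of_real (R2 iA iB oB / q) * op_trace (B oB iB \<rho>))"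
            by (simp only: sum_divide_distrib of_real_sum sum_distrib_right)
          finally show ?thesis by simp
        qed
      qed
      also have "\<dots> = (\<Sum>iB\<in>IB. complex_of_real (r2 iB / q) * op_trace \<rho>)"
      proof (intro sum.cong refl)
        fix iB assume "iB \<in> IB"
        then show "(\<Sum>oB\<in>OB. complex_of_real (r2 iB / q) * op_trace (B oB iB \<rho>)) = complex_of_real (r2 iB / q) * op_trace \<rho>"
          using instB instr_trace \<open>iB \<in> IB\<close> unfolding sum_distrib_left[symmetric] by metis
      qed
      also have "\<dots> = complex_of_real (q / q) * op_trace \<rho>"
        unfolding q(1)[symmetric] sum_distrib_right[symmetric] sum_divide_distrib[symmetric] of_real_sum[symmetric] by (rule refl)
      finally show "op_trace (sum_maps ?L ?B \<rho>) = op_trace \<rho>" using q(2) by simp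
    qed
  qed
  moreover have "\<forall>m\<in>?L. CPTP (?A m)"
    using instA by (auto intro: instr_CPTP)
  ultimately show ?thesis unfolding LOCC_BA_def
    by (intro CollectI exI[of _ ?L] exI[of _ ?A] exI[of _ ?B] conjI) (auto simp: sum_maps_def)
qed




lemma sum_identity:
  fixes T :: "nat \<Rightarrow> nat \<Rightarrow> nat \<Rightarrow> nat \<Rightarrow> complex"
  assumes "\<And>iA iB oA oB. iA \<in> IA \<Longrightarrow> iB \<in> IB \<Longrightarrow> oA \<in> OA \<Longrightarrow> oB \<in> OB \<Longrightarrow>
        p iA iB oA oB = R1 iA iB oA + R2 iA iB oB"
  shows "(\<Sum>iA\<in>IA. \<Sum>iB\<in>IB. \<Sum>oA\<in>OA. \<Sum>oB\<in>OB. complex_of_real (p iA iB oA oB) * T iA iB oA oB) =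
    (\<Sum>iA\<in>IA. \<Sum>oA\<in>OA. \<Sum>iB\<in>IB. complex_of_real (R1 iA iB oA) * (\<Sum>oB\<in>OB. T iA iB oA oB)) +
    (\<Sum>iB\<in>IB. \<Sum>oB\<in>OB. \<Sum>iA\<in>IA. complex_of_real (R2 iA iB oB) * (\<Sum>oA\<in>OA. T iA iB oA oB))"
proof -
  have "(\<Sum>iA\<in>IA. \<Sum>iB\<in>IB. \<Sum>oA\<in>OA. \<Sum>oB\<in>OB. complex_of_real (p iA iB oA oB) * T iA iB oA oB) =
        (\<Sum>iA\<in>IA. \<Sum>iB\<in>IB. \<Sum>oA\<in>OA. \<Sum>oB\<in>OB. complex_of_real (R1 iA iB oA) * T iA iB oA oB + complex_of_real (R2 iA iB oB) * T iA iB oA oB)"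
    using assms by (intro sum.cong refl) (simp add: algebra_simps)
  also have "\<dots> = (\<Sum>iA\<in>IA. \<Sum>iB\<in>IB. \<Sum>oA\<in>OA. \<Sum>oB\<in>OB. complex_of_real (R1 iA iB oA) * T iA iB oA oB) +
                 (\<Sum>iA\<in>IA. \<Sum>iB\<in>IB. \<Sum>oA\<in>OA. \<Sum>oB\<in>OB. complex_of_real (R2 iA iB oB) * T iA iB oA oB)"
    by (simp only: sum.distrib)
  also have "(\<Sum>iA\<in>IA. \<Sum>iB\<in>IB. \<Sum>oA\<in>OA. \<Sum>oB\<in>OB. complex_of_real (R1 iA iB oA) * T iA iB oA oB) =
     (\<Sum>iA\<in>IA. \<Sum>oA\<in>OA. \<Sum>iB\<in>IB. complex_of_real (R1 iA iB oA) * (\<Sum>oB\<in>OB. T iA iB oA oB))"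
    by (simp add: sum_distrib_left sum.swap[of _ IB])
  also have "(\<Sum>iA\<in>IA. \<Sum>iB\<in>IB. \<Sum>oA\<in>OA. \<Sum>oB\<in>OB. complex_of_real (R2 iA iB oB) * T iA iB oA oB) =
     (\<Sum>iA\<in>IA. \<Sum>iB\<in>IB. \<Sum>oB\<in>OB. \<Sum>oA\<in>OA. complex_of_real (R2 iA iB oB) * T iA iB oA oB)"
    by (simp add: sum.swap[of _ OA])
  also have "\<dots> = (\<Sum>iB\<in>IB. \<Sum>iA\<in>IA. \<Sum>oB\<in>OB. \<Sum>oA\<in>OA. complex_of_real (R2 iA iB oB) * T iA iB oA oB)"
    by (rule sum.swap)
  also have "\<dots> = (\<Sum>iB\<in>IB. \<Sum>oB\<in>OB. \<Sum>iA\<in>IA. \<Sum>oA\<in>OA. complex_of_real (R2 iA iB oB) * T iA iB oA oB)"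
    by (simp add: sum.swap[of _ IA])
  also have "\<dots> = (\<Sum>iB\<in>IB. \<Sum>oB\<in>OB. \<Sum>iA\<in>IA. complex_of_real (R2 iA iB oB) * (\<Sum>oA\<in>OA. T iA iB oA oB))"
    by (simp add: sum_distrib_left)
  finally show ?thesis .
qed

lemma sum_maps_apply: "sum_maps S F \<rho> k l = (\<Sum>m\<in>S. F m \<rho> k l)"
  by (simp add: sum_maps_def)

lemma M1c_eval:
  "sum_maps (enc3 ` (IA \<times> OA \<times> IB))
           (\<lambda>m. tensor_map (case dec3 m of (iA,oA,iB) \<Rightarrow> scale_map (R1 iA iB oA / q) (A oA iA))
                            (case dec3 m of (iA,oA,iB) \<Rightarrow> sum_maps OB (\<lambda>oB. B oB iB))) \<rho> k l
   = (\<Sum>iA\<in>IA. \<Sum>oA\<in>OA. \<Sum>iB\<in>IB. complex_of_real (R1 iA iB oA / q) *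
         (\<Sum>oB\<in>OB. tensor_map (A oA iA) (B oB iB) \<rho> k l))"
  by (simp only: sum_maps_apply sum_enc3 sum3 dec3_enc3 prod.case tensor_scale_left tensor_sum_right sum_distrib_left)

lemma M2c_eval:
  "sum_maps (enc3 ` (IB \<times> OB \<times> IA))
           (\<lambda>m. tensor_map (case dec3 m of (iB,oB,iA) \<Rightarrow> sum_maps OA (\<lambda>oA. A oA iA))
                            (case dec3 m of (iB,oB,iA) \<Rightarrow> scale_map (R2 iA iB oB / q) (B oB iB))) \<rho> k l
   = (\<Sum>iB\<in>IB. \<Sum>oB\<in>OB. \<Sum>iA\<in>IA. complex_of_real (R2 iA iB oB / q) *
         (\<Sum>oA\<in>OA. tensor_map (A oA iA) (B oB iB) \<rho> k l))"
  by (simp only: sum_maps_apply sum_enc3 sum3 dec3_enc3 prod.case tensor_scale_right tensor_sum_left sum_distrib_left)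

lemma fallback_AB:
  fixes A :: "nat \<Rightarrow> nat \<Rightarrow> ('x::finite, 'a::finite) qmap" and B :: "nat \<Rightarrow> nat \<Rightarrow> ('y::finite, 'b::finite) qmap"
  assumes "instrument OA (\<lambda>oA. A oA iA)" "instrument OB (\<lambda>oB. B oB iB)"
  shows "sum_maps OA (\<lambda>u. tensor_map (A u iA) (sum_maps OB (\<lambda>oB. B oB iB))) \<in> LOCC_AB"
  unfolding LOCC_AB_def
  by (intro CollectI exI[of _ OA] exI[of _ "\<lambda>u. A u iA"] exI[of _ "\<lambda>_. sum_maps OB (\<lambda>oB. B oB iB)"] conjI)
     (use assms instr_CPTP in auto)

lemma fallback_BA:
  fixes A :: "nat \<Rightarrow> nat \<Rightarrow> ('x::finite, 'a::finite) qmap" and B :: "nat \<Rightarrow> nat \<Rightarrow> ('y::finite, 'b::finite) qmap"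
  assumes "instrument OA (\<lambda>oA. A oA iA)" "instrument OB (\<lambda>oB. B oB iB)"
  shows "sum_maps OB (\<lambda>u. tensor_map (sum_maps OA (\<lambda>oA. A oA iA)) (B u iB)) \<in> LOCC_BA"
  unfolding LOCC_BA_def
  by (intro CollectI exI[of _ OB] exI[of _ "\<lambda>_. sum_maps OA (\<lambda>oA. A oA iA)"] exI[of _ "\<lambda>u. B u iB"] conjI)
     (use assms instr_CPTP in auto)




lemma scale_back:
  fixes R :: "nat \<Rightarrow> nat \<Rightarrow> nat \<Rightarrow> real"
  assumes fin: "finite X" "finite Y" and nn: "\<And>x y z. x \<in> X \<Longrightarrow> y \<in> Y \<Longrightarrow> z \<in> Z \<Longrightarrow> R x y z \<ge> 0"
    and r: "\<And>x z. x \<in> X \<Longrightarrow> z \<in> Z \<Longrightarrow> (\<Sum>y\<in>Y. R x y z) = r x"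
    and q: "(\<Sum>x\<in>X. r x) = q"
    and xyz: "x \<in> X" "y \<in> Y" "z \<in> Z"
  shows "q * (R x y z / q) = R x y z"
proof (cases "q = 0")
  case True
  have rnn: "\<forall>x'\<in>X. r x' \<ge> 0"
  proof
    fix x' assume "x' \<in> X"
    then have "r x' = (\<Sum>y\<in>Y. R x' y z)" using r xyz(3) by simp
    also have "\<dots> \<ge> 0" using nn \<open>x' \<in> X\<close> xyz(3) by (intro sum_nonneg) auto
    finally show "r x' \<ge> 0" .
  qed
  have "r x = 0" using sum_nonneg_eq_0_iff[OF fin(1)] rnn q True xyz(1) by auto
  then have "(\<Sum>y\<in>Y. R x y z) = 0" using r xyz by simp
  then have "\<forall>y'\<in>Y. R x y' z = 0" using sum_nonneg_eq_0_iff[OF fin(2), of "\<lambda>y. R x y z"] nn xyz by auto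
  then have "R x y z = 0" using xyz by auto
  then show ?thesis by simp
qed simp

lemma forward:
  fixes \<M> :: "('x::finite \<times> 'y::finite, 'a::finite \<times> 'b::finite) qmap"
  assumes "\<M> \<in> LOCQP"
  shows "\<exists>q::real. 0 \<le> q \<and> q \<le> 1 \<and>
       (\<exists>\<M>1 \<in> LOCC_AB. \<exists>\<M>2 \<in> LOCC_BA.
          \<M> = (\<lambda>\<rho> k l. complex_of_real q * \<M>1 \<rho> k l + complex_of_real (1 - q) * \<M>2 \<rho> k l))"
proof -
  obtain IA IB OA OB :: "nat set" and p :: "nat \<Rightarrow> nat \<Rightarrow> nat \<Rightarrow> nat \<Rightarrow> real"
    and A :: "nat \<Rightarrow> nat \<Rightarrow> ('x, 'a) qmap" and B :: "nat \<Rightarrow> nat \<Rightarrow> ('y, 'b) qmap" where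
    fin: "finite IA" "finite IB" "finite OA" "finite OB" and
    instA: "\<forall>iA\<in>IA. instrument OA (\<lambda>oA. A oA iA)" and
    instB: "\<forall>iB\<in>IB. instrument OB (\<lambda>oB. B oB iB)" and
    cp: "cond_prob (OA \<times> OB) (IA \<times> IB) (\<lambda>(iA, iB) (oA, oB). p iA iB oA oB)" and
    nrm: "\<forall>pA pB. cond_prob IA OA pA \<longrightarrow> cond_prob IB OB pB \<longrightarrow>
        (\<Sum>iA\<in>IA. \<Sum>iB\<in>IB. \<Sum>oA\<in>OA. \<Sum>oB\<in>OB.
            p iA iB oA oB * pA oA iA * pB oB iB) = 1" and
    Mdef: "\<M> = (\<lambda>\<rho> k l. \<Sum>iA\<in>IA. \<Sum>iB\<in>IB. \<Sum>oA\<in>OA. \<Sum>oB\<in>OB.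
            complex_of_real (p iA iB oA oB) * tensor_map (A oA iA) (B oB iB) \<rho> k l)"
    using assms unfolding LOCQP_def mem_Collect_eq by (elim exE conjE) blast
  have N: "Norm IA IB OA OB p" using nrm unfolding Norm_def by blast
  have OA_ne: "OA \<noteq> {}" if "IA \<noteq> {}"
  proof
    assume "OA = {}"
    from that obtain iA where "iA \<in> IA" by auto
    then have "instrument OA (\<lambda>oA. A oA iA)" using instA by auto
    then show False using \<open>OA = {}\<close> not_TP_empty unfolding instrument_def by metis
  qed
  have OB_ne: "OB \<noteq> {}" if "IB \<noteq> {}"
  proof
    assume "OB = {}"
    from that obtain iB where "iB \<in> IB" by auto
    then have "instrument OB (\<lambda>oB. B oB iB)" using instB by auto
    then show False using \<open>OB = {}\<close> not_TP_empty unfolding instrument_def by metis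
  qed
  have exA: "\<exists>pA. cond_prob IA OA pA"
  proof (cases "OA = {}")
    case True then have "IA = {}" using OA_ne by blast
    then show ?thesis by (auto simp: cond_prob_def)
  next
    case False then obtain u where "u \<in> OA" by auto
    then show ?thesis using cond_prob_det[OF fin(3), of "\<lambda>_. u" IA] by auto
  qed
  have exB: "\<exists>pB. cond_prob IB OB pB"
  proof (cases "OB = {}")
    case True then have "IB = {}" using OB_ne by blast
    then show ?thesis by (auto simp: cond_prob_def)
  next
    case False then obtain u where "u \<in> OB" by auto
    then show ?thesis using cond_prob_det[OF fin(4), of "\<lambda>_. u" IB] by auto
  qed
  have IA_ne: "IA \<noteq> {}"
  proof
    assume "IA = {}"
    obtain pA pB where "cond_prob IA OA pA" "cond_prob IB OB pB" using exA exB by blast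
    then show False using nrm \<open>IA = {}\<close> by force
  qed
  have IB_ne: "IB \<noteq> {}"
  proof
    assume "IB = {}"
    obtain pA pB where "cond_prob IA OA pA" "cond_prob IB OB pB" using exA exB by blast
    then show False using nrm \<open>IB = {}\<close> by force
  qed
  obtain iA0 where iA0: "iA0 \<in> IA" using IA_ne by auto
  obtain iB0 where iB0: "iB0 \<in> IB" using IB_ne by auto
  obtain oA0 where oA0: "oA0 \<in> OA" using OA_ne[OF IA_ne] by auto
  obtain oB0 where oB0: "oB0 \<in> OB" using OB_ne[OF IB_ne] by auto
  have nonneg: "p iA iB oA oB \<ge> 0" if "iA \<in> IA" "iB \<in> IB" "oA \<in> OA" "oB \<in> OB" for iA iB oA oB
    using cp that unfolding cond_prob_def by fastforce
  have tot: "(\<Sum>iA\<in>IA. \<Sum>iB\<in>IB. p iA iB oA0 oB0) = 1"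
  proof -
    have "(\<Sum>r\<in>IA \<times> IB. (\<lambda>(iA, iB) (oA, oB). p iA iB oA oB) r (oA0, oB0)) = 1"
      using cp oA0 oB0 unfolding cond_prob_def by blast
    then show ?thesis by (simp add: sum.cartesian_product case_prod_beta)
  qed
  obtain R1 R2 r1 r2 q where
    R1nn: "\<And>iA iB oA. iA \<in> IA \<Longrightarrow> iB \<in> IB \<Longrightarrow> oA \<in> OA \<Longrightarrow> R1 iA iB oA \<ge> 0" and
    R2nn: "\<And>iA iB oB. iA \<in> IA \<Longrightarrow> iB \<in> IB \<Longrightarrow> oB \<in> OB \<Longrightarrow> R2 iA iB oB \<ge> 0" and
    pR: "\<And>iA iB oA oB. iA \<in> IA \<Longrightarrow> iB \<in> IB \<Longrightarrow> oA \<in> OA \<Longrightarrow> oB \<in> OB \<Longrightarrow>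
        p iA iB oA oB = R1 iA iB oA + R2 iA iB oB" and
    r1: "\<And>iA oA. iA \<in> IA \<Longrightarrow> oA \<in> OA \<Longrightarrow> (\<Sum>iB\<in>IB. R1 iA iB oA) = r1 iA" and
    r2: "\<And>iB oB. iB \<in> IB \<Longrightarrow> oB \<in> OB \<Longrightarrow> (\<Sum>iA\<in>IA. R2 iA iB oB) = r2 iB" and
    q1: "(\<Sum>iA\<in>IA. r1 iA) = q" and q2: "(\<Sum>iB\<in>IB. r2 iB) = 1 - q"
    using decomp[OF N fin oA0 oB0 nonneg tot] by blast
  have q_ge: "q \<ge> 0"
  proof -
    have "q = (\<Sum>iA\<in>IA. \<Sum>iB\<in>IB. R1 iA iB oA0)" using q1 r1 oA0 by simp
    also have "\<dots> \<ge> 0" using R1nn oA0 by (intro sum_nonneg) auto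
    finally show ?thesis .
  qed
  have q_le: "1 - q \<ge> 0"
  proof -
    have "1 - q = (\<Sum>iB\<in>IB. \<Sum>iA\<in>IA. R2 iA iB oB0)" using q2 r2 oB0 by simp
    also have "\<dots> \<ge> 0" using R2nn oB0 by (intro sum_nonneg) auto
    finally show ?thesis .
  qed
  define M1c where "M1c = sum_maps (enc3 ` (IA \<times> OA \<times> IB))
           (\<lambda>m. tensor_map (case dec3 m of (iA,oA,iB) \<Rightarrow> scale_map (R1 iA iB oA / q) (A oA iA))
                            (case dec3 m of (iA,oA,iB) \<Rightarrow> sum_maps OB (\<lambda>oB. B oB iB)))"
  define M2c where "M2c = sum_maps (enc3 ` (IB \<times> OB \<times> IA))
           (\<lambda>m. tensor_map (case dec3 m of (iB,oB,iA) \<Rightarrow> sum_maps OA (\<lambda>oA. A oA iA))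
                            (case dec3 m of (iB,oB,iA) \<Rightarrow> scale_map (R2 iA iB oB / (1 - q)) (B oB iB)))"
  define M1 where "M1 = (if q > 0 then M1c else sum_maps OA (\<lambda>u. tensor_map (A u iA0) (sum_maps OB (\<lambda>oB. B oB iB0))))"
  define M2 where "M2 = (if 1 - q > 0 then M2c else sum_maps OB (\<lambda>u. tensor_map (sum_maps OA (\<lambda>oA. A oA iA0)) (B u iB0)))"
  have M1: "M1 \<in> LOCC_AB"
    unfolding M1_def M1c_def
    using build_AB[OF fin instA instB R1nn r1 q1] fallback_AB[of OA A iA0 OB B iB0] instA instB iA0 iB0 by auto
  have M2: "M2 \<in> LOCC_BA"
    unfolding M2_def M2c_def
    using build_BA[OF fin instA instB R2nn r2 q2] fallback_BA[of OA A iA0 OB B iB0] instA instB iA0 iB0 by auto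
  have M1e: "complex_of_real q * M1 \<rho> k l = complex_of_real q * M1c \<rho> k l" for \<rho> k l
    using q_ge by (cases "q > 0") (auto simp: M1_def)
  have M2e: "complex_of_real (1 - q) * M2 \<rho> k l = complex_of_real (1 - q) * M2c \<rho> k l" for \<rho> k l
    using q_le by (cases "1 - q > 0") (auto simp: M2_def)
  have "\<M> = (\<lambda>\<rho> k l. complex_of_real q * M1 \<rho> k l + complex_of_real (1 - q) * M2 \<rho> k l)"
  proof (intro ext)
    fix \<rho> k l
    define T where "T iA iB oA oB = tensor_map (A oA iA) (B oB iB) \<rho> k l" for iA iB oA oB
    have "\<M> \<rho> k l = (\<Sum>iA\<in>IA. \<Sum>iB\<in>IB. \<Sum>oA\<in>OA. \<Sum>oB\<in>OB. complex_of_real (p iA iB oA oB) * T iA iB oA oB)"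
      by (simp add: Mdef T_def)
    also have "\<dots> = (\<Sum>iA\<in>IA. \<Sum>oA\<in>OA. \<Sum>iB\<in>IB. complex_of_real (R1 iA iB oA) * (\<Sum>oB\<in>OB. T iA iB oA oB)) +
    (\<Sum>iB\<in>IB. \<Sum>oB\<in>OB. \<Sum>iA\<in>IA. complex_of_real (R2 iA iB oB) * (\<Sum>oA\<in>OA. T iA iB oA oB))"
      by (rule sum_identity) (rule pR)
    also have "(\<Sum>iA\<in>IA. \<Sum>oA\<in>OA. \<Sum>iB\<in>IB. complex_of_real (R1 iA iB oA) * (\<Sum>oB\<in>OB. T iA iB oA oB)) =
        complex_of_real q * M1c \<rho> k l"
    proof -
      have "complex_of_real q * M1c \<rho> k l = (\<Sum>iA\<in>IA. \<Sum>oA\<in>OA. \<Sum>iB\<in>IB. complex_of_real (q * (R1 iA iB oA / q)) * (\<Sum>oB\<in>OB. T iA iB oA oB))"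
        unfolding M1c_def M1c_eval T_def by (simp only: sum_distrib_left of_real_mult mult.assoc)
      also have "\<dots> = (\<Sum>iA\<in>IA. \<Sum>oA\<in>OA. \<Sum>iB\<in>IB. complex_of_real (R1 iA iB oA) * (\<Sum>oB\<in>OB. T iA iB oA oB))"
        by (intro sum.cong refl) (rule arg_cong[where f="\<lambda>c. complex_of_real c * _"], rule scale_back[OF fin(1,2) R1nn r1 q1])
      finally show ?thesis by simp
    qed
    also have "(\<Sum>iB\<in>IB. \<Sum>oB\<in>OB. \<Sum>iA\<in>IA. complex_of_real (R2 iA iB oB) * (\<Sum>oA\<in>OA. T iA iB oA oB)) =
        complex_of_real (1 - q) * M2c \<rho> k l"
    proof -
      have R2nn': "\<And>iB iA oB. iB \<in> IB \<Longrightarrow> iA \<in> IA \<Longrightarrow> oB \<in> OB \<Longrightarrow> (\<lambda>iB iA oB. R2 iA iB oB) iB iA oB \<ge> 0"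
        using R2nn by simp
      have r2': "\<And>iB oB. iB \<in> IB \<Longrightarrow> oB \<in> OB \<Longrightarrow> (\<Sum>iA\<in>IA. (\<lambda>iB iA oB. R2 iA iB oB) iB iA oB) = r2 iB"
        using r2 by simp
      have sb2: "(1 - q) * (R2 iA iB oB / (1 - q)) = R2 iA iB oB" if "iA \<in> IA" "iB \<in> IB" "oB \<in> OB" for iA iB oB
        by (rule scale_back[where X=IB and Y=IA and Z=OB and R="\<lambda>iB iA oB. R2 iA iB oB" and r=r2 and q="1-q"]) (use fin R2nn r2 q2 that in auto)
      have "complex_of_real (1 - q) * M2c \<rho> k l = (\<Sum>iB\<in>IB. \<Sum>oB\<in>OB. \<Sum>iA\<in>IA. complex_of_real ((1 - q) * (R2 iA iB oB / (1 - q))) * (\<Sum>oA\<in>OA. T iA iB oA oB))"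
        unfolding M2c_def M2c_eval T_def by (simp only: sum_distrib_left of_real_mult mult.assoc)
      also have "\<dots> = (\<Sum>iB\<in>IB. \<Sum>oB\<in>OB. \<Sum>iA\<in>IA. complex_of_real (R2 iA iB oB) * (\<Sum>oA\<in>OA. T iA iB oA oB))"
        by (intro sum.cong refl) (rule arg_cong[where f="\<lambda>c. complex_of_real c * _"], rule sb2)
      finally show ?thesis by simp
    qed
    finally show "\<M> \<rho> k l = complex_of_real q * M1 \<rho> k l + complex_of_real (1 - q) * M2 \<rho> k l"
      unfolding M1e M2e .
  qed
  then show ?thesis using M1 M2 q_ge q_le by auto
qed




lemma delta2:
  fixes G :: "nat \<Rightarrow> nat \<Rightarrow> 'c::comm_monoid_add"
  assumes "finite IA" "finite IB" "a \<in> IA" "b \<in> IB"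
  shows "(\<Sum>iA\<in>IA. \<Sum>iB\<in>IB. if iA = a \<and> iB = b then G iA iB else 0) = G a b"
proof -
  have "(\<Sum>iA\<in>IA. \<Sum>iB\<in>IB. if iA = a \<and> iB = b then G iA iB else 0) =
        (\<Sum>iA\<in>IA. if iA = a then (\<Sum>iB\<in>IB. if iB = b then G iA iB else 0) else 0)"
    by (intro sum.cong refl) auto
  also have "\<dots> = G a b" using assms by (simp add: sum.delta')
  finally show ?thesis .
qed

lemma delta_sum:
  fixes F :: "nat \<Rightarrow> nat \<Rightarrow> nat \<Rightarrow> nat \<Rightarrow> 'c::comm_monoid_add"
  assumes fin: "finite IA" "finite IB" and a: "\<And>oA oB. oA \<in> OA \<Longrightarrow> oB \<in> OB \<Longrightarrow> fa oA oB \<in> IA"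
    and b: "\<And>oA oB. oA \<in> OA \<Longrightarrow> oB \<in> OB \<Longrightarrow> fb oA oB \<in> IB"
  shows "(\<Sum>iA\<in>IA. \<Sum>iB\<in>IB. \<Sum>oA\<in>OA. \<Sum>oB\<in>OB. if iA = fa oA oB \<and> iB = fb oA oB then F iA iB oA oB else 0)
       = (\<Sum>oA\<in>OA. \<Sum>oB\<in>OB. F (fa oA oB) (fb oA oB) oA oB)"
proof -
  have "(\<Sum>iA\<in>IA. \<Sum>iB\<in>IB. \<Sum>oA\<in>OA. \<Sum>oB\<in>OB. if iA = fa oA oB \<and> iB = fb oA oB then F iA iB oA oB else 0)
     = (\<Sum>iA\<in>IA. \<Sum>oA\<in>OA. \<Sum>iB\<in>IB. \<Sum>oB\<in>OB. if iA = fa oA oB \<and> iB = fb oA oB then F iA iB oA oB else 0)"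
    by (simp add: sum.swap[of _ IB])
  also have "\<dots> = (\<Sum>oA\<in>OA. \<Sum>iA\<in>IA. \<Sum>iB\<in>IB. \<Sum>oB\<in>OB. if iA = fa oA oB \<and> iB = fb oA oB then F iA iB oA oB else 0)"
    by (rule sum.swap)
  also have "\<dots> = (\<Sum>oA\<in>OA. \<Sum>iA\<in>IA. \<Sum>oB\<in>OB. \<Sum>iB\<in>IB. if iA = fa oA oB \<and> iB = fb oA oB then F iA iB oA oB else 0)"
    by (simp add: sum.swap[of _ OB])
  also have "\<dots> = (\<Sum>oA\<in>OA. \<Sum>oB\<in>OB. \<Sum>iA\<in>IA. \<Sum>iB\<in>IB. if iA = fa oA oB \<and> iB = fb oA oB then F iA iB oA oB else 0)"
    by (simp add: sum.swap[of _ IA])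
  also have "\<dots> = (\<Sum>oA\<in>OA. \<Sum>oB\<in>OB. F (fa oA oB) (fb oA oB) oA oB)"
    by (intro sum.cong refl) (rule delta2[OF fin a b])
  finally show ?thesis .
qed




lemma backward:
  fixes \<M> :: "('x::finite \<times> 'y::finite, 'a::finite \<times> 'b::finite) qmap"
  assumes q: "0 \<le> q" "q \<le> 1" and M1: "M1 \<in> LOCC_AB" and M2: "M2 \<in> LOCC_BA"
    and Me: "\<M> = (\<lambda>\<rho> k l. complex_of_real q * M1 \<rho> k l + complex_of_real (1 - q) * M2 \<rho> k l)"
  shows "\<M> \<in> LOCQP"
proof -
  obtain L1 and A1 :: "nat \<Rightarrow> ('x, 'a) qmap" and B1 :: "nat \<Rightarrow> ('y, 'b) qmap" where
    iA1: "instrument L1 A1" and cB1: "\<forall>m\<in>L1. CPTP (B1 m)" and M1e: "M1 = sum_maps L1 (\<lambda>m. tensor_map (A1 m) (B1 m))"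
    using M1 unfolding LOCC_AB_def by blast
  obtain L2 and A2 :: "nat \<Rightarrow> ('x, 'a) qmap" and B2 :: "nat \<Rightarrow> ('y, 'b) qmap" where
    iB2: "instrument L2 B2" and cA2: "\<forall>m\<in>L2. CPTP (A2 m)" and M2e: "M2 = sum_maps L2 (\<lambda>m. tensor_map (A2 m) (B2 m))"
    using M2 unfolding LOCC_BA_def by blast
  have finL1: "finite L1" and finL2: "finite L2" using iA1 iB2 by (auto simp: instrument_def)
  have "L1 \<noteq> {}" using iA1 not_TP_empty unfolding instrument_def by metis
  then obtain m0 where m0: "m0 \<in> L1" by auto
  have "L2 \<noteq> {}" using iB2 not_TP_empty unfolding instrument_def by metis
  then obtain n0 where n0: "n0 \<in> L2" by auto
  define IA where "IA = insert 0 (Suc ` L2)"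
  define IB where "IB = insert 0 (Suc ` L1)"
  define A where "A oA iA = (if iA = 0 then A1 oA else if oA = m0 then A2 (iA - 1) else zero_map)" for oA iA
  define B where "B oB iB = (if iB = 0 then B2 oB else if oB = n0 then B1 (iB - 1) else zero_map)" for oB iB
  define p where "p iA iB oA oB = (if iA = 0 \<and> iB = Suc oA then q else 0) + (if iB = 0 \<and> iA = Suc oB then 1 - q else 0)"
    for iA iB oA oB :: nat
  have fin: "finite IA" "finite IB" using finL1 finL2 by (auto simp: IA_def IB_def)
  have instA: "\<forall>iA\<in>IA. instrument L1 (\<lambda>oA. A oA iA)"
  proof
    fix iA assume "iA \<in> IA"
    show "instrument L1 (\<lambda>oA. A oA iA)"
    proof (cases "iA = 0")
      case True then show ?thesis using iA1 by (simp add: A_def)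
    next
      case False
      then obtain n where n: "n \<in> L2" "iA = Suc n" using \<open>iA \<in> IA\<close> by (auto simp: IA_def)
      have cp: "CP (A2 n)" "TP (A2 n)" using cA2 n by (auto simp: CPTP_def)
      have "sum_maps L1 (\<lambda>oA. A oA iA) = A2 n"
        using m0 finL1 n by (auto simp: sum_maps_def A_def zero_map_def fun_eq_iff if_distrib[of "\<lambda>f. f _ _ _"] sum.delta' cong: if_cong)
      then show ?thesis using cp finL1 CP_zero n unfolding instrument_def by (auto simp: A_def)
    qed
  qed
  have instB: "\<forall>iB\<in>IB. instrument L2 (\<lambda>oB. B oB iB)"
  proof
    fix iB assume "iB \<in> IB"
    show "instrument L2 (\<lambda>oB. B oB iB)"
    proof (cases "iB = 0")
      case True then show ?thesis using iB2 by (simp add: B_def)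
    next
      case False
      then obtain n where n: "n \<in> L1" "iB = Suc n" using \<open>iB \<in> IB\<close> by (auto simp: IB_def)
      have cp: "CP (B1 n)" "TP (B1 n)" using cB1 n by (auto simp: CPTP_def)
      have "sum_maps L2 (\<lambda>oB. B oB iB) = B1 n"
        using n0 finL2 n by (auto simp: sum_maps_def B_def zero_map_def fun_eq_iff if_distrib[of "\<lambda>f. f _ _ _"] sum.delta' cong: if_cong)
      then show ?thesis using cp finL2 CP_zero n unfolding instrument_def by (auto simp: B_def)
    qed
  qed
  have cp: "cond_prob (L1 \<times> L2) (IA \<times> IB) (\<lambda>(iA, iB) (oA, oB). p iA iB oA oB)"
    unfolding cond_prob_def
  proof (intro ballI conjI)
    fix i r assume i: "i \<in> L1 \<times> L2" and r: "r \<in> IA \<times> IB"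
    then show "0 \<le> (\<lambda>(iA, iB) (oA, oB). p iA iB oA oB) r i" using q by (auto simp: p_def)
  next
    fix i assume i: "i \<in> L1 \<times> L2"
    then obtain oA oB where o: "oA \<in> L1" "oB \<in> L2" "i = (oA, oB)" by auto
    have "(\<Sum>r\<in>IA \<times> IB. (\<lambda>(iA, iB) (oA, oB). p iA iB oA oB) r i) = (\<Sum>iA\<in>IA. \<Sum>iB\<in>IB. p iA iB oA oB)"
      by (simp add: o sum.cartesian_product case_prod_beta)
    also have "\<dots> = (\<Sum>iA\<in>IA. \<Sum>iB\<in>IB. if iA = 0 \<and> iB = Suc oA then q else 0) +
                     (\<Sum>iA\<in>IA. \<Sum>iB\<in>IB. if iA = Suc oB \<and> iB = 0 then 1 - q else 0)"
      unfolding p_def sum.distrib by (intro arg_cong2[where f="(+)"] sum.cong refl) auto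
    also have "\<dots> = q + (1 - q)"
    proof -
      have mem: "0 \<in> IA" "Suc oA \<in> IB" "Suc oB \<in> IA" "0 \<in> IB" using o by (auto simp: IA_def IB_def)
      show ?thesis by (simp only: delta2[OF fin mem(1,2)] delta2[OF fin mem(3,4)])
    qed
    finally show "(\<Sum>r\<in>IA \<times> IB. (\<lambda>(iA, iB) (oA, oB). p iA iB oA oB) r i) = 1" by simp
  qed
  have nrm: "\<forall>pA pB. cond_prob IA L1 pA \<longrightarrow> cond_prob IB L2 pB \<longrightarrow>
        (\<Sum>iA\<in>IA. \<Sum>iB\<in>IB. \<Sum>oA\<in>L1. \<Sum>oB\<in>L2. p iA iB oA oB * pA oA iA * pB oB iB) = 1"
  proof (intro allI impI)
    fix pA pB assume cA: "cond_prob IA L1 pA" and cB: "cond_prob IB L2 pB"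
    have e1: "(\<Sum>iA\<in>IA. \<Sum>iB\<in>IB. \<Sum>oA\<in>L1. \<Sum>oB\<in>L2. p iA iB oA oB * pA oA iA * pB oB iB) =
       (\<Sum>iA\<in>IA. \<Sum>iB\<in>IB. \<Sum>oA\<in>L1. \<Sum>oB\<in>L2. if iA = 0 \<and> iB = Suc oA then q * pA oA iA * pB oB iB else 0) +
       (\<Sum>iA\<in>IA. \<Sum>iB\<in>IB. \<Sum>oA\<in>L1. \<Sum>oB\<in>L2. if iA = Suc oB \<and> iB = 0 then (1 - q) * pA oA iA * pB oB iB else 0)"
      unfolding sum.distrib[symmetric] by (intro sum.cong refl) (auto simp: p_def algebra_simps)
    have X: "(\<Sum>iA\<in>IA. \<Sum>iB\<in>IB. \<Sum>oA\<in>L1. \<Sum>oB\<in>L2. if iA = 0 \<and> iB = Suc oA then q * pA oA iA * pB oB iB else 0)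
        = (\<Sum>oA\<in>L1. \<Sum>oB\<in>L2. q * pA oA 0 * pB oB (Suc oA))"
      by (rule delta_sum[where fa="\<lambda>_ _. 0" and fb="\<lambda>oA _. Suc oA" and F="\<lambda>iA iB oA oB. q * pA oA iA * pB oB iB", simplified])
         (use fin in \<open>auto simp: IA_def IB_def\<close>)
    have Y: "(\<Sum>iA\<in>IA. \<Sum>iB\<in>IB. \<Sum>oA\<in>L1. \<Sum>oB\<in>L2. if iA = Suc oB \<and> iB = 0 then (1 - q) * pA oA iA * pB oB iB else 0)
        = (\<Sum>oA\<in>L1. \<Sum>oB\<in>L2. (1 - q) * pA oA (Suc oB) * pB oB 0)"
      by (rule delta_sum[where fa="\<lambda>_ oB. Suc oB" and fb="\<lambda>_ _. 0" and F="\<lambda>iA iB oA oB. (1 - q) * pA oA iA * pB oB iB", simplified])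
         (use fin in \<open>auto simp: IA_def IB_def\<close>)
    have X1: "(\<Sum>oA\<in>L1. \<Sum>oB\<in>L2. q * pA oA 0 * pB oB (Suc oA)) = q"
    proof -
      have "(\<Sum>oA\<in>L1. \<Sum>oB\<in>L2. q * pA oA 0 * pB oB (Suc oA)) = (\<Sum>oA\<in>L1. q * pA oA 0 * (\<Sum>oB\<in>L2. pB oB (Suc oA)))"
        by (simp add: sum_distrib_left)
      also have "\<dots> = (\<Sum>oA\<in>L1. q * pA oA 0)"
        using cB by (intro sum.cong refl) (auto simp: cond_prob_def IB_def)
      also have "\<dots> = q * (\<Sum>oA\<in>L1. pA oA 0)" by (simp add: sum_distrib_left)
      also have "\<dots> = q" using cA by (auto simp: cond_prob_def IA_def)
      finally show ?thesis .
    qed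
    have Y1: "(\<Sum>oA\<in>L1. \<Sum>oB\<in>L2. (1 - q) * pA oA (Suc oB) * pB oB 0) = 1 - q"
    proof -
      have "(\<Sum>oA\<in>L1. \<Sum>oB\<in>L2. (1 - q) * pA oA (Suc oB) * pB oB 0) = (\<Sum>oB\<in>L2. (1 - q) * pB oB 0 * (\<Sum>oA\<in>L1. pA oA (Suc oB)))"
        by (simp add: sum_distrib_left sum_distrib_right sum.swap[of _ L1] mult_ac)
      also have "\<dots> = (\<Sum>oB\<in>L2. (1 - q) * pB oB 0)"
        using cA by (intro sum.cong refl) (auto simp: cond_prob_def IA_def)
      also have "\<dots> = (1 - q) * (\<Sum>oB\<in>L2. pB oB 0)" by (simp add: sum_distrib_left)
      also have "\<dots> = 1 - q" using cB by (auto simp: cond_prob_def IB_def)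
      finally show ?thesis .
    qed
    show "(\<Sum>iA\<in>IA. \<Sum>iB\<in>IB. \<Sum>oA\<in>L1. \<Sum>oB\<in>L2. p iA iB oA oB * pA oA iA * pB oB iB) = 1"
      unfolding e1 X Y X1 Y1 by simp
  qed
  have Mrep: "\<M> = (\<lambda>\<rho> k l. \<Sum>iA\<in>IA. \<Sum>iB\<in>IB. \<Sum>oA\<in>L1. \<Sum>oB\<in>L2.
            complex_of_real (p iA iB oA oB) * tensor_map (A oA iA) (B oB iB) \<rho> k l)"
  proof (intro ext)
    fix \<rho> k l
    define T where "T iA iB oA oB = tensor_map (A oA iA) (B oB iB) \<rho> k l" for iA iB oA oB
    have e1: "(\<Sum>iA\<in>IA. \<Sum>iB\<in>IB. \<Sum>oA\<in>L1. \<Sum>oB\<in>L2. complex_of_real (p iA iB oA oB) * T iA iB oA oB) =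
       (\<Sum>iA\<in>IA. \<Sum>iB\<in>IB. \<Sum>oA\<in>L1. \<Sum>oB\<in>L2. if iA = 0 \<and> iB = Suc oA then complex_of_real q * T iA iB oA oB else 0) +
       (\<Sum>iA\<in>IA. \<Sum>iB\<in>IB. \<Sum>oA\<in>L1. \<Sum>oB\<in>L2. if iA = Suc oB \<and> iB = 0 then complex_of_real (1 - q) * T iA iB oA oB else 0)"
      unfolding sum.distrib[symmetric] by (intro sum.cong refl) (auto simp: p_def algebra_simps)
    have X: "(\<Sum>iA\<in>IA. \<Sum>iB\<in>IB. \<Sum>oA\<in>L1. \<Sum>oB\<in>L2. if iA = 0 \<and> iB = Suc oA then complex_of_real q * T iA iB oA oB else 0)
        = (\<Sum>oA\<in>L1. \<Sum>oB\<in>L2. complex_of_real q * T 0 (Suc oA) oA oB)"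
      by (rule delta_sum[where fa="\<lambda>_ _. 0" and fb="\<lambda>oA _. Suc oA" and F="\<lambda>iA iB oA oB. complex_of_real q * T iA iB oA oB", simplified])
         (use fin in \<open>auto simp: IA_def IB_def\<close>)
    have Y: "(\<Sum>iA\<in>IA. \<Sum>iB\<in>IB. \<Sum>oA\<in>L1. \<Sum>oB\<in>L2. if iA = Suc oB \<and> iB = 0 then complex_of_real (1 - q) * T iA iB oA oB else 0)
        = (\<Sum>oA\<in>L1. \<Sum>oB\<in>L2. complex_of_real (1 - q) * T (Suc oB) 0 oA oB)"
      by (rule delta_sum[where fa="\<lambda>_ oB. Suc oB" and fb="\<lambda>_ _. 0" and F="\<lambda>iA iB oA oB. complex_of_real (1 - q) * T iA iB oA oB"])
         (use fin in \<open>auto simp: IA_def IB_def\<close>)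
    have X1: "(\<Sum>oA\<in>L1. \<Sum>oB\<in>L2. complex_of_real q * T 0 (Suc oA) oA oB) = complex_of_real q * M1 \<rho> k l"
    proof -
      have "(\<Sum>oB\<in>L2. T 0 (Suc oA) oA oB) = tensor_map (A1 oA) (B1 oA) \<rho> k l" for oA
      proof -
        have "(\<Sum>oB\<in>L2. T 0 (Suc oA) oA oB) = (\<Sum>oB\<in>L2. if oB = n0 then tensor_map (A1 oA) (B1 oA) \<rho> k l else 0)"
          by (intro sum.cong refl) (simp add: T_def A_def B_def tensor_zero_right)
        also have "\<dots> = tensor_map (A1 oA) (B1 oA) \<rho> k l" using n0 finL2 by (simp add: sum.delta')
        finally show ?thesis .
      qed
      then show ?thesis by (simp add: M1e sum_maps_apply sum_distrib_left[symmetric])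
    qed
    have Y1: "(\<Sum>oA\<in>L1. \<Sum>oB\<in>L2. complex_of_real (1 - q) * T (Suc oB) 0 oA oB) = complex_of_real (1 - q) * M2 \<rho> k l"
    proof -
      have "(\<Sum>oA\<in>L1. T (Suc oB) 0 oA oB) = tensor_map (A2 oB) (B2 oB) \<rho> k l" for oB
      proof -
        have "(\<Sum>oA\<in>L1. T (Suc oB) 0 oA oB) = (\<Sum>oA\<in>L1. if oA = m0 then tensor_map (A2 oB) (B2 oB) \<rho> k l else 0)"
          by (intro sum.cong refl) (simp add: T_def A_def B_def tensor_zero_left)
        also have "\<dots> = tensor_map (A2 oB) (B2 oB) \<rho> k l" using m0 finL1 by (simp add: sum.delta')
        finally show ?thesis .
      qed
      moreover have "(\<Sum>oA\<in>L1. \<Sum>oB\<in>L2. complex_of_real (1 - q) * T (Suc oB) 0 oA oB) =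
          (\<Sum>oB\<in>L2. complex_of_real (1 - q) * (\<Sum>oA\<in>L1. T (Suc oB) 0 oA oB))"
        by (simp add: sum_distrib_left sum.swap[of _ L1])
      ultimately show ?thesis by (simp add: M2e sum_maps_apply sum_distrib_left[symmetric])
    qed
    show "\<M> \<rho> k l = (\<Sum>iA\<in>IA. \<Sum>iB\<in>IB. \<Sum>oA\<in>L1. \<Sum>oB\<in>L2.
            complex_of_real (p iA iB oA oB) * tensor_map (A oA iA) (B oB iB) \<rho> k l)"
      using e1 X Y X1 Y1 unfolding T_def by (simp add: Me)
  qed
  show ?thesis unfolding LOCQP_def
    by (intro CollectI exI[of _ IA] exI[of _ IB] exI[of _ L1] exI[of _ L2] exI[of _ p] exI[of _ A] exI[of _ B] conjI)
       (use fin finL1 finL2 instA instB cp nrm Mrep in auto)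
qed


theorem mainTheorem17:
  fixes \<M> :: "('x::finite \<times> 'y::finite, 'a::finite \<times> 'b::finite) qmap"
  assumes "CPTP \<M>"
  shows "\<M> \<in> LOCQP \<longleftrightarrow>
    (\<exists>q::real. 0 \<le> q \<and> q \<le> 1 \<and>
       (\<exists>\<M>1 \<in> LOCC_AB. \<exists>\<M>2 \<in> LOCC_BA.
          \<M> = (\<lambda>\<rho> k l. complex_of_real q * \<M>1 \<rho> k l + complex_of_real (1 - q) * \<M>2 \<rho> k l)))"
proof
  assume "\<M> \<in> LOCQP"
  then show "\<exists>q::real. 0 \<le> q \<and> q \<le> 1 \<and>
       (\<exists>\<M>1 \<in> LOCC_AB. \<exists>\<M>2 \<in> LOCC_BA.
          \<M> = (\<lambda>\<rho> k l. complex_of_real q * \<M>1 \<rho> k l + complex_of_real (1 - q) * \<M>2 \<rho> k l))"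
    by (rule forward)
next
  assume "\<exists>q::real. 0 \<le> q \<and> q \<le> 1 \<and>
       (\<exists>\<M>1 \<in> LOCC_AB. \<exists>\<M>2 \<in> LOCC_BA.
          \<M> = (\<lambda>\<rho> k l. complex_of_real q * \<M>1 \<rho> k l + complex_of_real (1 - q) * \<M>2 \<rho> k l))"
  then obtain q M1 M2 where "0 \<le> q" "q \<le> 1" "M1 \<in> LOCC_AB" "M2 \<in> LOCC_BA"
     "\<M> = (\<lambda>\<rho> k l. complex_of_real q * M1 \<rho> k l + complex_of_real (1 - q) * M2 \<rho> k l)"
    by blast
  then show "\<M> \<in> LOCQP" by (rule backward)
qed

end
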